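(* Let $\lambda>0$, $0<\varepsilon_g<1$, $f$ twice continuously differentiable satisfying $f(y)\le f(x)+\nabla f(x)^\top(y-x)+\frac12(y-x)^\top\nabla^2f(x)(y-x)+\frac{L_H}6\|y-x\|^3$, and $\varphi=f+\lambda\|\cdot\|_1$. Let $x^k\in\mathbb{R}^n$, $I^{k\varepsilon}_+=\{i:x^k_i>\varepsilon_g^{1/2}\}$, $I^{k\varepsilon}_-=\{i:x^k_i<-\varepsilon_g^{1/2}\}$, $I^{k\varepsilon}_{\neq0}=I^{k\varepsilon}_+\cup I^{k\varepsilon}_-$, $I^{k\varepsilon}_0=\{i:|x^k_i|\le\varepsilon_g^{1/2}\}$, and let $d^k\in\mathbb{R}^n$ satisfy $d^k_{I^{k\varepsilon}_0}=0$ (as in a Newton-CG step of PGN2CM). Let $H^k_{\neq0\varepsilon}=(\nabla^2f(x^k))_{I^{k\varepsilon}_{\neq0}}$, $g^k_{\neq0\varepsilon}=g^\varepsilon(x^k)_{I^{k\varepsilon}_{\neq0}}$, $d^k_{\neq0\varepsilon}=d^k_{I^{k\varepsilon}_{\neq0}}$, and $t^k_+=\min_{i\in J^k_+}\{-x^k_i/d^k_i\}$, $t^k_-=\min_{i\in J^k_-}\{-x^k_i/d^k_i\}$ with $J^k_+=\{i\in I^{k\varepsilon}_+:d^k_i<0\}$, $J^k_-=\{i\in I^{k\varepsilon}_-:d^k_i>0\}$ (each $+\infty$ if the set is empty). Then for any $t\in(0,\min\{t^k_+,t^k_-\}]$, $$\varphi(x^k+td^k)\le\varphi(x^k)+t(g^k_{\neq0\varepsilon})^\top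 d^k_{\neq0\varepsilon}+\frac12t^2(d^k_{\neq0\varepsilon})^\top H^k_{\neq0\varepsilon}d^k_{\neq0\varepsilon}+\frac{L_H}6t^3\|d^k_{\neq0\varepsilon}\|^3.$$
   Context: $g^\varepsilon(x)$: $g^\varepsilon_i=(\nabla f(x))_i+\lambda$ if $x_i>\varepsilon_g^{1/2}$, $(\nabla f(x))_i-\lambda$ if $x_i<-\varepsilon_g^{1/2}$, and $(\nabla f(x))_i-\min\{\max\{-\lambda-\varepsilon_g^{3/4},(\nabla f(x))_i\},\lambda+\varepsilon_g^{3/4}\}$ if $|x_i|\le\varepsilon_g^{1/2}$. $A_J$ denotes principal submatrix/subvector on index set $J$. In the paper the cubic bound on $f$ holds with constant $L_H$ on the level set $\{x:\varphi(x)\le\varphi(x^0)\}$. *)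

theory Defs
  imports "HOL-Analysis.Analysis" "HOL-Library.Extended_Real"
begin

definition l1norm :: "real^'n \<Rightarrow> real" where
  "l1norm x = (\<Sum>i\<in>UNIV. \<bar>x $ i\<bar>)"

definition phi :: "(real^'n \<Rightarrow> real) \<Rightarrow> real \<Rightarrow> real^'n \<Rightarrow> real" where
  "phi f lam x = f x + lam * l1norm x"

definition Iplus :: "real \<Rightarrow> real^'n \<Rightarrow> 'n set" where
  "Iplus eps x = {i. x $ i > sqrt eps}"

definition Iminus :: "real \<Rightarrow> real^'n \<Rightarrow> 'n set" where
  "Iminus eps x = {i. x $ i < - sqrt eps}"

definition Inz :: "real \<Rightarrow> real^'n \<Rightarrow> 'n set" where
  "Inz eps x = Iplus eps x \<union> Iminus eps x"

definition Izero :: "real \<Rightarrow> real^'n \<Rightarrow> 'n set" where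
  "Izero eps x = {i. \<bar>x $ i\<bar> \<le> sqrt eps}"

text \<open>g^eps(x), given the gradient vector gx = grad f(x).\<close>
definition geps :: "real \<Rightarrow> real \<Rightarrow> real^'n \<Rightarrow> real^'n \<Rightarrow> real^'n" where
  "geps lam eps gx x = (\<chi> i.
     if x $ i > sqrt eps then gx $ i + lam
     else if x $ i < - sqrt eps then gx $ i - lam
     else gx $ i - min (max (- lam - eps powr (3/4)) (gx $ i)) (lam + eps powr (3/4)))"

definition Jplus :: "real \<Rightarrow> real^'n \<Rightarrow> real^'n \<Rightarrow> 'n set" where
  "Jplus eps x d = {i \<in> Iplus eps x. d $ i < 0}"

definition Jminus :: "real \<Rightarrow> real^'n \<Rightarrow> real^'n \<Rightarrow> 'n set" where
  "Jminus eps x d = {i \<in> Iminus eps x. d $ i > 0}"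

definition ratio_min :: "'n::finite set \<Rightarrow> real^'n \<Rightarrow> real^'n \<Rightarrow> ereal" where
  "ratio_min J x d = (if J = {} then \<infinity> else ereal (Min ((\<lambda>i. - x $ i / d $ i) ` J)))"

definition tplus :: "real \<Rightarrow> real^'n::finite \<Rightarrow> real^'n \<Rightarrow> ereal" where
  "tplus eps x d = ratio_min (Jplus eps x d) x d"

definition tminus :: "real \<Rightarrow> real^'n::finite \<Rightarrow> real^'n \<Rightarrow> ereal" where
  "tminus eps x d = ratio_min (Jminus eps x d) x d"

end

theory Submission
  imports Defs
begin

theorem lemma8:
  fixes f :: "real^'n \<Rightarrow> real"
    and G :: "real^'n \<Rightarrow> real^'n"
    and H :: "real^'n \<Rightarrow> real^'n^'n"
    and lam eps LH t :: real
    and x d :: "real^'n"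
  assumes lam_pos: "lam > 0"
    and eps: "0 < eps" "eps < 1"
    and grad: "\<And>y. (f has_derivative (\<lambda>h. G y \<bullet> h)) (at y)"
    and hess: "\<And>y. (G has_derivative (\<lambda>h. H y *v h)) (at y)"
    and hess_cont: "continuous_on UNIV H"
    and cubic: "\<And>y z. f z \<le> f y + G y \<bullet> (z - y) + 1/2 * ((z - y) \<bullet> (H y *v (z - y)))
                          + LH / 6 * norm (z - y) ^ 3"
    and d_zero: "\<And>i. i \<in> Izero eps x \<Longrightarrow> d $ i = 0"
    and t_pos: "0 < t"
    and t_le: "ereal t \<le> min (tplus eps x d) (tminus eps x d)"
  shows "phi f lam (x + t *\<^sub>R d) \<le> phi f lam x
           + t * (\<Sum>i\<in>Inz eps x. geps lam eps (G x) x $ i * d $ i)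
           + 1/2 * t^2 * (\<Sum>i\<in>Inz eps x. \<Sum>j\<in>Inz eps x. d $ i * (H x $ i $ j) * d $ j)
           + LH / 6 * t^3 * (L2_set (\<lambda>i. d $ i) (Inz eps x)) ^ 3"
proof -
  let ?N = "Inz eps x"
  have se: "sqrt eps \<ge> 0" using eps by simp
  have dz: "d $ i = 0" if "i \<notin> ?N" for i
    using that d_zero by (auto simp: Inz_def Iplus_def Iminus_def Izero_def)
  have tp: "ereal t \<le> tplus eps x d" and tm: "ereal t \<le> tminus eps x d"
    using t_le by auto
  have absP: "\<bar>x $ i + t * d $ i\<bar> = \<bar>x $ i\<bar> + t * d $ i" if "i \<in> Iplus eps x" for i
  proof -
    have "x $ i > sqrt eps" using that by (simp add: Iplus_def)
    hence xp: "x $ i > 0" using se by linarith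
    show ?thesis
  proof (cases "d $ i < 0")
    case True
    hence J: "i \<in> Jplus eps x d" using that by (simp add: Jplus_def)
    hence "tplus eps x d = ereal (Min ((\<lambda>i. - x $ i / d $ i) ` Jplus eps x d))"
      by (auto simp: tplus_def ratio_min_def)
    moreover have "Min ((\<lambda>i. - x $ i / d $ i) ` Jplus eps x d) \<le> - x $ i / d $ i"
      using J by (intro Min_le) auto
    ultimately have "t \<le> - x $ i / d $ i" using tp by auto
    hence "t * d $ i \<ge> (- x $ i / d $ i) * d $ i" using True by (intro mult_right_mono_neg) auto
    hence "t * d $ i \<ge> - x $ i" using True by simp
    then show ?thesis using xp by simp
  next
    case False
    then show ?thesis using xp t_pos by simp
  qed
  qed
  have absM: "\<bar>x $ i + t * d $ i\<bar> = \<bar>x $ i\<bar> - t * d $ i" if "i \<in> Iminus eps x" for i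
  proof -
    have "x $ i < - sqrt eps" using that by (simp add: Iminus_def)
    hence xm: "x $ i < 0" using se by linarith
    show ?thesis
  proof (cases "d $ i > 0")
    case True
    hence J: "i \<in> Jminus eps x d" using that by (simp add: Jminus_def)
    hence "tminus eps x d = ereal (Min ((\<lambda>i. - x $ i / d $ i) ` Jminus eps x d))"
      by (auto simp: tminus_def ratio_min_def)
    moreover have "Min ((\<lambda>i. - x $ i / d $ i) ` Jminus eps x d) \<le> - x $ i / d $ i"
      using J by (intro Min_le) auto
    ultimately have "t \<le> - x $ i / d $ i" using tm by auto
    hence "t * d $ i \<le> (- x $ i / d $ i) * d $ i" using True by (intro mult_right_mono) auto
    hence "t * d $ i \<le> - x $ i" using True by simp
    then show ?thesis using xm by simp
  next
    case False
    then show ?thesis proof -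
      have "t * d $ i \<le> 0" using False t_pos by (simp add: mult_nonneg_nonpos)
      thus ?thesis using xm by simp
    qed
  qed
  qed
  define s where "s i = (if i \<in> Iplus eps x then lam else - lam)" for i
  have abs_all: "lam * \<bar>x $ i + t * d $ i\<bar> = lam * \<bar>x $ i\<bar> + t * (s i * d $ i)" for i
  proof (cases "i \<in> ?N")
    case True
    show ?thesis
    proof (cases "i \<in> Iplus eps x")
      case True
      then show ?thesis using absP[OF True] by (simp add: s_def algebra_simps)
    next
      case False
      hence M: "i \<in> Iminus eps x" using \<open>i \<in> ?N\<close> by (simp add: Inz_def)
      have "lam * \<bar>x $ i + t * d $ i\<bar> = lam * (\<bar>x $ i\<bar> - t * d $ i)" using absM[OF M] by simp
      then show ?thesis using False by (simp add: s_def algebra_simps)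
    qed
  next
    case False then show ?thesis using dz by simp
  qed
  have l1: "lam * l1norm (x + t *\<^sub>R d) = lam * l1norm x + t * (\<Sum>i\<in>?N. s i * d $ i)"
  proof -
    have "lam * l1norm (x + t *\<^sub>R d) = (\<Sum>i\<in>UNIV. lam * \<bar>x $ i + t * d $ i\<bar>)"
      by (simp add: l1norm_def sum_distrib_left)
    also have "\<dots> = lam * l1norm x + t * (\<Sum>i\<in>UNIV. s i * d $ i)"
      by (simp add: abs_all sum.distrib l1norm_def sum_distrib_left)
    also have "(\<Sum>i\<in>UNIV. s i * d $ i) = (\<Sum>i\<in>?N. s i * d $ i)"
      by (rule sum.mono_neutral_right) (auto simp: dz)
    finally show ?thesis .
  qed
  have gsum: "G x \<bullet> d = (\<Sum>i\<in>?N. G x $ i * d $ i)"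
    unfolding inner_vec_def inner_real_def by (rule sum.mono_neutral_right) (auto simp: dz)
  have geq: "(\<Sum>i\<in>?N. geps lam eps (G x) x $ i * d $ i) = (\<Sum>i\<in>?N. G x $ i * d $ i) + (\<Sum>i\<in>?N. s i * d $ i)"
    unfolding sum.distrib[symmetric]
    by (rule sum.cong) (auto simp: geps_def s_def Inz_def Iplus_def Iminus_def algebra_simps)
  have hsum: "d \<bullet> (H x *v d) = (\<Sum>i\<in>?N. \<Sum>j\<in>?N. d $ i * (H x $ i $ j) * d $ j)"
  proof -
    have "d \<bullet> (H x *v d) = (\<Sum>i\<in>UNIV. \<Sum>j\<in>UNIV. d $ i * (H x $ i $ j) * d $ j)"
      by (simp add: inner_vec_def matrix_vector_mult_def sum_distrib_left mult.assoc)
    also have "\<dots> = (\<Sum>i\<in>UNIV. \<Sum>j\<in>?N. d $ i * (H x $ i $ j) * d $ j)"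
      by (intro sum.cong refl sum.mono_neutral_right) (auto simp: dz)
    also have "\<dots> = (\<Sum>i\<in>?N. \<Sum>j\<in>?N. d $ i * (H x $ i $ j) * d $ j)"
      by (rule sum.mono_neutral_right) (auto simp: dz)
    finally show ?thesis .
  qed
  have nd: "norm d = L2_set (\<lambda>i. d $ i) ?N"
  proof -
    have "norm d = sqrt (\<Sum>i\<in>UNIV. (d $ i)^2)"
      by (simp add: norm_vec_def L2_set_def)
    also have "(\<Sum>i\<in>UNIV. (d $ i)^2) = (\<Sum>i\<in>?N. (d $ i)^2)"
      by (rule sum.mono_neutral_right) (auto simp: dz)
    finally show ?thesis by (simp add: L2_set_def)
  qed
  have c: "f (x + t *\<^sub>R d) \<le> f x + G x \<bullet> (t *\<^sub>R d) + 1/2 * ((t *\<^sub>R d) \<bullet> (H x *v (t *\<^sub>R d)))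
                          + LH / 6 * norm (t *\<^sub>R d) ^ 3"
    using cubic[where y=x and z="x + t *\<^sub>R d"] by simp
  have e1: "G x \<bullet> (t *\<^sub>R d) = t * (G x \<bullet> d)" by simp
  have e2: "(t *\<^sub>R d) \<bullet> (H x *v (t *\<^sub>R d)) = t^2 * (d \<bullet> (H x *v d))"
    by (simp add: matrix_vector_mult_scaleR power2_eq_square)
  have e3: "norm (t *\<^sub>R d) ^ 3 = t^3 * norm d ^ 3"
    using t_pos by (simp add: power_mult_distrib)
  show ?thesis
    using c l1 unfolding phi_def e1 e2 e3 gsum hsum nd geq
    by (simp add: algebra_simps)
qed

end
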